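(* Let $R$, $Q_R$ be as in the context, let $q=a+v\in Q_R$ and $z:=a+i|v|\in R$. Then $$L_q(t)=\mathrm{Re}\,L_z(t)+\frac{v}{|v|}\,\mathrm{Im}\,L_z(t),\qquad t\in\mathbb{R}.$$
   Context: $\mathbb{H}_\mathbb{R}$ denotes the real quaternions $a+v_1e_1+v_2e_2+v_3e_3$ with $e_1^2=e_2^2=e_3^2=-1$, $e_1e_2=e_3$, $e_2e_3=e_1$, $e_3e_1=e_2$; $\mathbb{H}_\mathbb{C}$ the complex quaternions (complex coefficients, $i$ commuting with every $e_j$). For $q=a+v$, $v=\sum v_je_j$, $|v|=(\sum v_j^2)^{1/2}$. Quaternionic power: for $\zeta\in\mathbb{C}\setminus\{0\}$, $\zeta^q:=\zeta^a[\cos(|v|\log\zeta)+\frac{v}{|v|}\sin(|v|\log\zeta)]$ (principal $\log$). $\Xi(\xi):=\frac{1-e^{-i\xi}}{i\xi}$, $\Xi(0):=1$. $\widehat{B_q}:=\Xi^q$ (quaternionic power) and, for $w\in\mathbb{C}$ with $\mathrm{Re}\,w>1$, $\widehat{B_w}:=e^{w\log\Xi}$; $B_q,B_w$ are the inverse Fourier transforms ($\hat f(\xi)=\int f(x)e^{-i\xi x}dx$). Classical Hurwitz zeta: $\zeta(s,a)=\sum_{k\ge0}(a+k)^{-s}$. Standing assumption: $R\subset\{w\in\mathbb{C}:\mathrm{Re}\,w>1\}$ with $\overline R=R$ and $\zeta(w,\alpha)+e^{-i\pi w}\zeta(w,1-\alpha)\ne0$ for all $w\in R$, $\alpha\in(0,1)$;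 $Q_R:=\{q=a+v\in\mathbb{H}_\mathbb{R}: v\ne0,\ a+i|v|\in R\}$. For $q\in Q_R$ the quaternionic fundamental cardinal spline is $L_q(x):=\frac1{2\pi}\int\widehat{B_q}(\xi)\big(\sum_k\widehat{B_q}(\xi+2\pi k)\big)^{-1}e^{i\xi x}d\xi$; for $z\in R$ the complex fundamental cardinal spline is $L_z(x):=\frac1{2\pi}\int\widehat{B_z}(\xi)\big(\sum_k\widehat{B_z}(\xi+2\pi k)\big)^{-1}e^{i\xi x}d\xi$ (denominators nonvanishing/invertible); equivalently $L_z=\sum_jw_jB_z(\cdot-j)$ where $\sum_jB_z(m-j)w_j=\delta_{m,0}$, $m\in\mathbb{Z}$. *)

theory Defs
  imports "HOL-Analysis.Analysis"
begin

datatype rquat = RQuat (rq0: real) (rq1: real) (rq2: real) (rq3: real)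

text \<open>Complex quaternions a + v1 e1 + v2 e2 + v3 e3 with complex coefficients
  (the imaginary unit i commutes with every e_j).\<close>
datatype cquat = CQuat (cq0: complex) (cq1: complex) (cq2: complex) (cq3: complex)

text \<open>Hamilton product, e1 e2 = e3, e2 e3 = e1, e3 e1 = e2, ej^2 = -1.\<close>
definition cq_mult :: "cquat \<Rightarrow> cquat \<Rightarrow> cquat" where
  "cq_mult p q = CQuat
     (cq0 p * cq0 q - cq1 p * cq1 q - cq2 p * cq2 q - cq3 p * cq3 q)
     (cq0 p * cq1 q + cq1 p * cq0 q + cq2 p * cq3 q - cq3 p * cq2 q)
     (cq0 p * cq2 q - cq1 p * cq3 q + cq2 p * cq0 q + cq3 p * cq1 q)
     (cq0 p * cq3 q + cq1 p * cq2 q - cq2 p * cq1 q + cq3 p * cq0 q)"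

text \<open>Multiplicative inverse in the complex quaternions: conj(q)/N(q) with
  N(q) = q0^2+q1^2+q2^2+q3^2 (q is invertible iff N(q) is nonzero).\<close>
definition cq_inverse :: "cquat \<Rightarrow> cquat" where
  "cq_inverse q = (let N = cq0 q ^ 2 + cq1 q ^ 2 + cq2 q ^ 2 + cq3 q ^ 2 in
     CQuat (cq0 q / N) (- cq1 q / N) (- cq2 q / N) (- cq3 q / N))"

definition cq_scale :: "complex \<Rightarrow> cquat \<Rightarrow> cquat" where
  "cq_scale c q = CQuat (c * cq0 q) (c * cq1 q) (c * cq2 q) (c * cq3 q)"

definition rq_to_cq :: "rquat \<Rightarrow> cquat" where
  "rq_to_cq q = CQuat (of_real (rq0 q)) (of_real (rq1 q)) (of_real (rq2 q)) (of_real (rq3 q))"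

definition vnorm :: "rquat \<Rightarrow> real" where
  "vnorm q = sqrt (rq1 q ^ 2 + rq2 q ^ 2 + rq3 q ^ 2)"

definition cq_infsum_int :: "(int \<Rightarrow> cquat) \<Rightarrow> cquat" where
  "cq_infsum_int f = CQuat (\<Sum>\<^sub>\<infinity>k\<in>UNIV. cq0 (f k)) (\<Sum>\<^sub>\<infinity>k\<in>UNIV. cq1 (f k))
                          (\<Sum>\<^sub>\<infinity>k\<in>UNIV. cq2 (f k)) (\<Sum>\<^sub>\<infinity>k\<in>UNIV. cq3 (f k))"

definition cq_integral :: "(real \<Rightarrow> cquat) \<Rightarrow> cquat" where
  "cq_integral f = CQuat (LINT x|lborel. cq0 (f x)) (LINT x|lborel. cq1 (f x))
                        (LINT x|lborel. cq2 (f x)) (LINT x|lborel. cq3 (f x))"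

text \<open>zeta^q = zeta^a [cos(|v| log zeta) + v/|v| sin(|v| log zeta)] with principal log
  (Isabelle's Ln / powr are principal). Convention: 0^q = 0.\<close>
definition qpow :: "complex \<Rightarrow> rquat \<Rightarrow> cquat" where
  "qpow \<zeta> q = (if \<zeta> = 0 then CQuat 0 0 0 0 else
     (let A = \<zeta> powr complex_of_real (rq0 q);
          C = cos (complex_of_real (vnorm q) * Ln \<zeta>);
          S = sin (complex_of_real (vnorm q) * Ln \<zeta>) in
      CQuat (A * C) (A * of_real (rq1 q / vnorm q) * S)
            (A * of_real (rq2 q / vnorm q) * S) (A * of_real (rq3 q / vnorm q) * S)))"

definition Xi :: "real \<Rightarrow> complex" where
  "Xi \<xi> = (if \<xi> = 0 then 1 else (1 - exp (- \<i> * of_real \<xi>)) / (\<i> * of_real \<xi>))"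

definition hatB_quat :: "rquat \<Rightarrow> real \<Rightarrow> cquat" where
  "hatB_quat q \<xi> = qpow (Xi \<xi>) q"

text \<open>e^{w log Xi}; at zeros of Xi (Re w > 1) the value is 0 (Isabelle's powr convention).\<close>
definition hatB_cplx :: "complex \<Rightarrow> real \<Rightarrow> complex" where
  "hatB_cplx w \<xi> = Xi \<xi> powr w"

definition L_quat :: "rquat \<Rightarrow> real \<Rightarrow> cquat" where
  "L_quat q x = cq_integral (\<lambda>\<xi>. cq_scale (exp (\<i> * of_real (\<xi> * x)) / (2 * of_real pi))
      (cq_mult (hatB_quat q \<xi>)
               (cq_inverse (cq_infsum_int (\<lambda>k. hatB_quat q (\<xi> + 2 * pi * of_int k))))))"

definition L_cplx :: "complex \<Rightarrow> real \<Rightarrow> complex" where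
  "L_cplx z x = (1 / (2 * of_real pi)) * (LINT \<xi>|lborel.
      hatB_cplx z \<xi> / (\<Sum>\<^sub>\<infinity>k\<in>(UNIV::int set). hatB_cplx z (\<xi> + 2 * pi * of_int k))
      * exp (\<i> * of_real (\<xi> * x)))"

definition hurwitz_zeta :: "complex \<Rightarrow> real \<Rightarrow> complex" where
  "hurwitz_zeta s a = (\<Sum>k. complex_of_real (a + real k) powr (- s))"

definition admissible_R :: "complex set \<Rightarrow> bool" where
  "admissible_R R \<longleftrightarrow> R \<subseteq> {w. Re w > 1} \<and> cnj ` R = R \<and>
     (\<forall>w\<in>R. \<forall>\<alpha>\<in>{0<..<1}. hurwitz_zeta w \<alpha> + exp (- \<i> * of_real pi * w) * hurwitz_zeta w (1 - \<alpha>) \<noteq> 0)"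

definition Q_set :: "complex set \<Rightarrow> rquat set" where
  "Q_set R = {q. (rq1 q, rq2 q, rq3 q) \<noteq> (0, 0, 0) \<and>
                 Complex (rq0 q) (vnorm q) \<in> R}"

end

theory Submission
  imports Defs "HOL-Library.Nat_Bijection"
begin

lemma Xi_nz: "\<xi> \<noteq> 0 \<Longrightarrow> Xi \<xi> = Complex (sin \<xi> / \<xi>) ((cos \<xi> - 1) / \<xi>)"
  by (simp add: Xi_def complex_eq_iff exp_minus_Euler field_simps cos_of_real sin_of_real Re_divide Im_divide power2_eq_square)

lemma Xi_0 [simp]: "Xi 0 = 1" by (simp add: Xi_def)

lemma Xi_cnj: "Xi (-\<xi>) = cnj (Xi \<xi>)"
  by (cases "\<xi> = 0") (simp_all add: Xi_nz complex_eq_iff divide_simps)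

lemma Xi_Im0: "Im (Xi \<xi>) = 0 \<Longrightarrow> Re (Xi \<xi>) \<ge> 0"
proof (cases "\<xi> = 0")
  case False
  assume "Im (Xi \<xi>) = 0"
  hence c: "cos \<xi> = 1" using False by (simp add: Xi_nz)
  have "sin \<xi> ^ 2 + cos \<xi> ^ 2 = 1" by simp
  hence "sin \<xi> = 0" using c by simp
  thus ?thesis using False by (simp add: Xi_nz)
qed simp

lemma Xi_not_nonpos: "Xi \<xi> \<noteq> 0 \<Longrightarrow> Xi \<xi> \<notin> \<real>\<^sub>\<le>\<^sub>0"
  using Xi_Im0[of \<xi>] by (auto simp: complex_nonpos_Reals_iff complex_eq_iff)

lemma norm_one_minus_exp: "cmod (1 - exp (- \<i> * of_real x)) \<le> \<bar>x\<bar>"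
proof -
  have "(cmod (1 - exp (- \<i> * of_real x)))^2 = (1 - cos x)^2 + (sin x)^2"
    by (simp add: cmod_power2 exp_minus_Euler cos_of_real sin_of_real)
  also have "\<dots> = 2 - 2 * cos x" by (simp add: power2_eq_square algebra_simps sin_squared_eq)
  also have "\<dots> = 4 * (sin (x/2))^2" using cos_double_sin[of "x/2"] by simp
  also have "\<dots> \<le> 4 * (x/2)^2"
    using abs_sin_x_le_abs_x[of "x/2"] abs_le_square_iff[of "sin (x/2)" "x/2"] by simp
  also have "\<dots> = \<bar>x\<bar>^2" by (simp add: power2_eq_square)
  finally show ?thesis using abs_le_square_iff by (metis abs_ge_zero norm_ge_zero power2_le_imp_le)
qed

lemma norm_one_minus_exp2: "cmod (1 - exp (- \<i> * of_real x)) \<le> 2"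
proof -
  have "cmod (1 - exp (- \<i> * of_real x)) \<le> cmod 1 + cmod (exp (- \<i> * of_real x))"
    by (rule norm_triangle_ineq4)
  also have "cmod (exp (- \<i> * of_real x)) = 1" by (simp add: norm_exp_eq_Re)
  finally show ?thesis by simp
qed

lemma norm_Xi_le1: "cmod (Xi \<xi>) \<le> 1"
proof (cases "\<xi> = 0")
  case False
  have "cmod (Xi \<xi>) = cmod (1 - exp (- \<i> * of_real \<xi>)) / \<bar>\<xi>\<bar>"
    using False by (simp add: Xi_def norm_divide norm_mult)
  also have "\<dots> \<le> 1" using norm_one_minus_exp[of \<xi>] False by (simp add: divide_simps)
  finally show ?thesis .
qed simp

lemma norm_Xi_le2: "\<xi> \<noteq> 0 \<Longrightarrow> cmod (Xi \<xi>) \<le> 2 / \<bar>\<xi>\<bar>"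
proof -
  assume False: "\<xi> \<noteq> 0"
  have "cmod (Xi \<xi>) = cmod (1 - exp (- \<i> * of_real \<xi>)) / \<bar>\<xi>\<bar>"
    using False by (simp add: Xi_def norm_divide norm_mult)
  also have "\<dots> \<le> 2 / \<bar>\<xi>\<bar>" using norm_one_minus_exp2[of \<xi>] False by (simp add: divide_right_mono)
  finally show ?thesis .
qed

lemma norm_Xi_le: "cmod (Xi \<xi>) \<le> 4 / (\<bar>\<xi>\<bar> + 1)"
proof (cases "\<bar>\<xi>\<bar> \<le> 3")
  case True
  have p: "0 < \<bar>\<xi>\<bar> + 1" by simp
  have "1 \<le> 4 / (\<bar>\<xi>\<bar> + 1)" using True p by (simp add: divide_simps)
  thus ?thesis using norm_Xi_le1[of \<xi>] by linarith
next
  case False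
  hence "\<xi> \<noteq> 0" by auto
  have "2 / \<bar>\<xi>\<bar> \<le> 4 / (\<bar>\<xi>\<bar> + 1)" using False by (simp add: divide_simps)
  thus ?thesis using norm_Xi_le2[OF \<open>\<xi> \<noteq> 0\<close>] by linarith
qed

lemma exp_2pik: "exp (- \<i> * of_real (2 * pi * of_int k)) = 1"
proof -
  have a: "- \<i> * of_real (2 * pi * of_int k) = (2 * of_int (-k) * pi) * \<i>" by (simp add: algebra_simps)
  have b: "exp ((2 * of_int (-k) * pi) * \<i>) = 1" by (rule exp_integer_2pi) simp
  show ?thesis unfolding a by (rule b)
qed

lemma Xi_periodic_zero: "k \<noteq> 0 \<Longrightarrow> Xi (2 * pi * of_int k) = 0"
proof -
  assume k: "k \<noteq> 0"
  have "exp (- \<i> * of_real (2 * pi * of_int k)) = 1"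
    by (rule exp_2pik)
  thus ?thesis using k by (simp add: Xi_def)
qed

lemma Xi_shift: "\<xi> + 2 * pi * of_int k \<noteq> 0 \<Longrightarrow>
   Xi (\<xi> + 2 * pi * of_int k) = (1 - exp (- \<i> * of_real \<xi>)) / (\<i> * of_real (\<xi> + 2 * pi * of_int k))"
proof -
  have "exp (- \<i> * of_real (\<xi> + 2 * pi * of_int k)) = exp (- \<i> * of_real \<xi>) * exp (- \<i> * of_real (2 * pi * of_int k))"
    by (simp add: exp_add[symmetric] algebra_simps)
  also have "exp (- \<i> * of_real (2 * pi * of_int k)) = 1"
    by (rule exp_2pik)
  finally show "\<xi> + 2 * pi * of_int k \<noteq> 0 \<Longrightarrow> ?thesis" by (simp add: Xi_def)
qed

lemma Xi_lim0: "(Xi \<longlongrightarrow> 1) (at 0)"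
proof -
  have "((\<lambda>z::complex. (exp z - 1) / z) \<longlongrightarrow> 1) (at 0)" by (rule lim_exp_minus_1)
  hence "((\<lambda>x::real. (exp (- \<i> * of_real x) - 1) / (- \<i> * of_real x)) \<longlongrightarrow> 1) (at 0)"
    apply (rule filterlim_compose)
    apply (rule filterlim_atI)
     apply (auto intro!: tendsto_eq_intros simp: eventually_at_filter)
    done
  moreover have "eventually (\<lambda>x. (exp (- \<i> * of_real x) - 1) / (- \<i> * of_real x) = Xi x) (at (0::real))"
    by (auto simp: eventually_at_filter Xi_def divide_simps algebra_simps)
  ultimately show ?thesis using tendsto_cong by fastforce
qed

lemma Xi_cont: "continuous_on UNIV Xi"
proof -
  have "isCont Xi x" for x
  proof (cases "x = 0")
    case True thus ?thesis using Xi_lim0 by (simp add: isCont_def)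
  next
    case False
    have c: "isCont (\<lambda>y. (1 - exp (- \<i> * of_real y)) / (\<i> * of_real y)) x"
      using False by (intro continuous_intros) auto
    have e: "eventually (\<lambda>y. (1 - exp (- \<i> * of_real y)) / (\<i> * of_real y) = Xi y) (nhds x)"
      using t1_space_nhds[OF False] by (rule eventually_mono) (simp add: Xi_def)
    show ?thesis using isCont_cong[OF e] c by simp
  qed
  thus ?thesis by (simp add: continuous_on_eq_continuous_at)
qed

definition Dw :: "complex \<Rightarrow> real \<Rightarrow> complex" where
  "Dw w \<xi> = (\<Sum>\<^sub>\<infinity>k\<in>(UNIV::int set). hatB_cplx w (\<xi> + 2 * pi * of_int k))"

lemma norm_powr_le: 
  assumes "0 \<le> Re w" "cmod x \<le> c"
  shows "cmod (x powr w) \<le> c powr Re w * exp (\<bar>Im w\<bar> * pi)"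
proof -
  have "cmod (x powr w) = cmod x powr Re w * exp (- Im w * Arg x)" by (rule norm_powr_complex)
  also have "\<dots> \<le> c powr Re w * exp (\<bar>Im w\<bar> * pi)"
  proof (rule mult_mono)
    show "cmod x powr Re w \<le> c powr Re w" using assms by (intro powr_mono2) auto
    have "- Im w * Arg x \<le> \<bar>Im w\<bar> * pi"
    proof -
      have "\<bar>Arg x\<bar> \<le> pi" using mpi_less_Arg[of x] Arg_le_pi[of x] by auto
      hence "\<bar>Im w * Arg x\<bar> \<le> \<bar>Im w\<bar> * pi" by (simp add: abs_mult mult_left_mono)
      thus ?thesis by linarith
    qed
    thus "exp (- Im w * Arg x) \<le> exp (\<bar>Im w\<bar> * pi)" by simp
  qed auto
  finally show ?thesis .
qed

lemma norm_hatB: "0 \<le> Re w \<Longrightarrow> cmod (hatB_cplx w \<xi>) \<le> (4 / (\<bar>\<xi>\<bar> + 1)) powr Re w * exp (\<bar>Im w\<bar> * pi)"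
  unfolding hatB_cplx_def by (rule norm_powr_le) (auto intro: norm_Xi_le)

lemma aux_div: "0 < a \<Longrightarrow> 0 < b \<Longrightarrow> 0 \<le> (T::real) \<Longrightarrow> b \<le> (T+1)*a \<Longrightarrow> 4/a \<le> 4*(T+1)/b"
  by (simp add: divide_simps) (simp add: algebra_simps)

lemma shift_bound:
  assumes "\<bar>\<xi>\<bar> \<le> T"
  shows "4 / (\<bar>\<xi> + 2 * pi * of_int k\<bar> + 1) \<le> 4 * (T + 1) / (\<bar>of_int k\<bar> + 1)"
proof -
  have T: "0 \<le> T" using assms by linarith
  have "\<bar>real_of_int k\<bar> \<le> 2 * pi * \<bar>of_int k\<bar>" using mult_right_mono[of 1 "2*pi" "\<bar>real_of_int k\<bar>"] pi_gt3 by simp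
  also have "\<dots> = \<bar>2 * pi * of_int k\<bar>" by (simp add: abs_mult)
  also have "\<dots> \<le> \<bar>\<xi> + 2 * pi * of_int k\<bar> + \<bar>\<xi>\<bar>" by linarith
  finally have "\<bar>real_of_int k\<bar> + 1 \<le> (T + 1) * (\<bar>\<xi> + 2 * pi * of_int k\<bar> + 1)"
    using assms T by (simp add: algebra_simps) (smt (verit, ccfv_SIG) mult_nonneg_nonneg abs_ge_zero)
  thus ?thesis using T by (intro aux_div) auto
qed

lemma norm_hatB_shift:
  assumes "0 \<le> Re w" "\<bar>\<xi>\<bar> \<le> T"
  shows "cmod (hatB_cplx w (\<xi> + 2 * pi * of_int k)) \<le>
     (4 * (T + 1)) powr Re w * exp (\<bar>Im w\<bar> * pi) * (\<bar>of_int k\<bar> + 1) powr (- Re w)"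
proof -
  have "cmod (hatB_cplx w (\<xi> + 2 * pi * of_int k)) \<le> (4 * (T + 1) / (\<bar>of_int k\<bar> + 1)) powr Re w * exp (\<bar>Im w\<bar> * pi)"
    unfolding hatB_cplx_def
    by (rule norm_powr_le[OF assms(1)]) (rule order.trans[OF norm_Xi_le shift_bound[OF assms(2)]])
  also have "(4 * (T + 1) / (\<bar>of_int k\<bar> + 1)) powr Re w = (4 * (T + 1)) powr Re w * (\<bar>of_int k\<bar> + 1) powr (- Re w)"
    using assms by (subst powr_divide) (auto simp: powr_minus divide_inverse)
  finally show ?thesis by (simp add: mult_ac)
qed

lemma summable_nat_powr: "s > 1 \<Longrightarrow> summable (\<lambda>n. (real n + c) powr (- s))" if "c \<ge> 1"
proof -
  assume s: "s > 1"
  have "summable (\<lambda>n. real n powr (- s))" using s by (subst summable_real_powr_iff) auto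
  hence "summable (\<lambda>n. real (n + 1) powr (- s))" by (rule summable_ignore_initial_segment)
  thus ?thesis
    by (rule summable_comparison_test'[where N=0])
       (use that s in \<open>auto intro!: powr_mono2' simp: algebra_simps\<close>)
qed

lemma summable_int_powr:
  fixes s :: real
  assumes "s > 1"
  shows "(\<lambda>k::int. (\<bar>of_int k\<bar> + 1) powr (- s)) summable_on UNIV"
proof -
  let ?M = "\<lambda>k::int. (\<bar>real_of_int k\<bar> + 1) powr (- s)"
  have U: "(UNIV :: int set) = range int \<union> range (\<lambda>n. - int n - 1)"
  proof (rule set_eqI)
    fix k :: int
    show "k \<in> UNIV \<longleftrightarrow> k \<in> range int \<union> range (\<lambda>n. - int n - 1)"
    proof (cases "k \<ge> 0")
      case True then have "k = int (nat k)" by simp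
      thus ?thesis by blast
    next
      case False then have "k = - int (nat (-k-1)) - 1" by simp
      thus ?thesis by blast
    qed
  qed
  have s1: "?M summable_on range int"
  proof (subst summable_on_reindex)
    show "inj_on int UNIV" by simp
    have "summable (\<lambda>n. (real n + 1) powr (- s))" using assms by (intro summable_nat_powr) auto
    hence "(\<lambda>n. (real n + 1) powr (- s)) summable_on UNIV"
      by (intro norm_summable_imp_summable_on) simp
    thus "(?M \<circ> int) summable_on UNIV" by (simp add: o_def)
  qed
  have s2: "?M summable_on range (\<lambda>n. - int n - 1)"
  proof (subst summable_on_reindex)
    show "inj_on (\<lambda>n. - int n - 1) UNIV" by (auto simp: inj_on_def)
    have "summable (\<lambda>n. (real n + 2) powr (- s))" using assms by (intro summable_nat_powr) auto
    hence "(\<lambda>n. (real n + 2) powr (- s)) summable_on UNIV"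
      by (intro norm_summable_imp_summable_on) simp
    moreover have "(?M \<circ> (\<lambda>n. - int n - 1)) = (\<lambda>n. (real n + 2) powr (- s))"
      by (rule ext) (simp add: abs_if add.commute)
    ultimately show "(?M \<circ> (\<lambda>n. - int n - 1)) summable_on UNIV" by simp
  qed
  have "?M summable_on (range int \<union> range (\<lambda>n. - int n - 1))"
    by (rule summable_on_Un_disjoint[OF s1 s2]) auto
  thus ?thesis using U by simp
qed

lemma summable_hatB_shift:
  assumes "1 < Re w"
  shows "(\<lambda>k::int. hatB_cplx w (\<xi> + 2 * pi * of_int k)) summable_on UNIV"
proof -
  let ?C = "(4 * (\<bar>\<xi>\<bar> + 1)) powr Re w * exp (\<bar>Im w\<bar> * pi)"
  have S: "(\<lambda>k::int. ?C * (\<bar>of_int k\<bar> + 1) powr (- Re w)) summable_on UNIV"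
    by (intro summable_on_cmult_right summable_int_powr assms)
  have "(\<lambda>k. norm (hatB_cplx w (\<xi> + 2 * pi * of_int k))) summable_on UNIV"
    by (rule Infinite_Sum.abs_summable_on_comparison_test'[OF S])
       (use norm_hatB_shift[of w \<xi> "\<bar>\<xi>\<bar>"] assms in auto)
  thus ?thesis by (rule abs_summable_summable)
qed

lemma hatB_cont: assumes "0 < Re w" shows "continuous_on UNIV (hatB_cplx w)"
proof -
  have "isCont (hatB_cplx w) x" for x
    unfolding hatB_cplx_def
  proof (rule continuous_powr_complex)
    show "isCont Xi x" using Xi_cont by (simp add: continuous_on_eq_continuous_at)
    show "isCont (\<lambda>_. w) x" by simp
    show "0 \<le> Re (Xi (netlimit (at x))) \<or> Im (Xi (netlimit (at x))) \<noteq> 0"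
      using Xi_Im0[of x] by auto
    show "Xi (netlimit (at x)) = 0 \<longrightarrow> 0 < Re w" using assms by simp
  qed
  thus ?thesis by (simp add: continuous_on_eq_continuous_at)
qed

lemma Dw_suminf:
  assumes "1 < Re w"
  shows "Dw w \<xi> = (\<Sum>n. hatB_cplx w (\<xi> + 2 * pi * of_int (int_decode n)))"
proof -
  have "((\<lambda>k::int. hatB_cplx w (\<xi> + 2 * pi * of_int k)) has_sum Dw w \<xi>) UNIV"
    unfolding Dw_def using summable_hatB_shift[OF assms] by (simp add: summable_iff_has_sum_infsum)
  hence "((\<lambda>n. hatB_cplx w (\<xi> + 2 * pi * of_int (int_decode n))) has_sum Dw w \<xi>) UNIV"
    by (subst has_sum_reindex_bij_betw[OF bij_int_decode])
  hence "(\<lambda>n. hatB_cplx w (\<xi> + 2 * pi * of_int (int_decode n))) sums Dw w \<xi>"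
    by (rule has_sum_imp_sums)
  thus ?thesis by (simp add: sums_iff)
qed

lemma Dw_cont_ball:
  assumes "1 < Re w"
  shows "continuous_on (ball 0 T) (Dw w)"
proof -
  let ?C = "(4 * (T + 1)) powr Re w * exp (\<bar>Im w\<bar> * pi)"
  let ?g = "\<lambda>n \<xi>. hatB_cplx w (\<xi> + 2 * pi * of_int (int_decode n))"
  have "(\<lambda>k::int. ?C * (\<bar>of_int k\<bar> + 1) powr (- Re w)) summable_on UNIV"
    by (intro summable_on_cmult_right summable_int_powr assms)
  hence "(\<lambda>n. ?C * (\<bar>of_int (int_decode n)\<bar> + 1) powr (- Re w)) summable_on UNIV"
    using summable_on_reindex_bij_betw[OF bij_int_decode, of "\<lambda>k::int. ?C * (\<bar>of_int k\<bar> + 1) powr (- Re w)"]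
    by simp
  then obtain S where "((\<lambda>n. ?C * (\<bar>of_int (int_decode n)\<bar> + 1) powr (- Re w)) has_sum S) UNIV"
    by (auto simp: summable_on_def)
  hence sM: "summable (\<lambda>n. ?C * (\<bar>of_int (int_decode n)\<bar> + 1) powr (- Re w))"
    by (auto dest!: has_sum_imp_sums simp: sums_iff)
  have ul: "uniform_limit (ball 0 T) (\<lambda>n \<xi>. \<Sum>i<n. ?g i \<xi>) (\<lambda>\<xi>. suminf (\<lambda>i. ?g i \<xi>)) sequentially"
    by (rule Weierstrass_m_test[OF _ sM]) (rule norm_hatB_shift, use assms in auto)
  have "continuous_on (ball 0 T) (\<lambda>\<xi>. suminf (\<lambda>i. ?g i \<xi>))"
  proof (rule uniform_limit_theorem[OF _ ul])
    have "continuous_on (ball 0 T) (?g i)" for i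
    proof -
      have c1: "continuous_on (ball 0 T) (\<lambda>\<xi>. \<xi> + 2 * pi * of_int (int_decode i))" by (intro continuous_intros)
      show ?thesis using continuous_on_compose2[OF hatB_cont[of w] c1] assms by auto
    qed
    thus "\<forall>\<^sub>F n in sequentially. continuous_on (ball 0 T) (\<lambda>\<xi>. \<Sum>i<n. ?g i \<xi>)"
      by (intro always_eventually allI continuous_on_sum) auto
  qed simp
  thus ?thesis using Dw_suminf[OF assms] by simp
qed

lemma Dw_cont: assumes "1 < Re w" shows "continuous_on UNIV (Dw w)"
proof -
  have "isCont (Dw w) x" for x
    using Dw_cont_ball[OF assms, of "\<bar>x\<bar> + 1"]
    by (subst (asm) continuous_on_eq_continuous_at) auto
  thus ?thesis by (simp add: continuous_on_eq_continuous_at)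
qed

lemma Dw_periodic: "Dw w (\<xi> + 2 * pi * of_int n) = Dw w \<xi>"
  unfolding Dw_def
  by (rule infsum_reindex_bij_witness[of UNIV "\<lambda>k. k - n" "\<lambda>k. k + n"]) (auto simp: algebra_simps)

lemma Dw_0: "Dw w 0 = 1"
proof -
  have "Dw w 0 = (\<Sum>\<^sub>\<infinity>k\<in>{0::int}. hatB_cplx w (0 + 2 * pi * of_int k))"
    unfolding Dw_def
    by (rule infsum_cong_neutral) (auto simp: hatB_cplx_def Xi_periodic_zero)
  also have "\<dots> = 1" by (simp add: hatB_cplx_def)
  finally show ?thesis .
qed

lemma ofreal_inv_powr: "0 < r \<Longrightarrow> complex_of_real (inverse r) powr w = complex_of_real r powr (-w)"
proof -
  assume r: "0 < r"
  have "Ln (inverse (complex_of_real r)) = - Ln (complex_of_real r)"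
    using r by (intro Ln_inverse) (auto simp: complex_nonpos_Reals_iff)
  thus ?thesis using r by (simp add: powr_def Ln_of_real)
qed

lemma ofreal_mult_powr: "0 \<le> a \<Longrightarrow> complex_of_real (a * b) powr w = of_real a powr w * of_real b powr w"
  using powr_times_real_left[of "of_real a" "of_real b" w] by simp

lemma hatB_scaled:
  assumes "0 < r" "Xi x = complex_of_real (inverse r) * V"
  shows "hatB_cplx w x = of_real (2*pi) powr (-w) * of_real (r/(2*pi)) powr (-w) * V powr w"
proof -
  have "hatB_cplx w x = of_real (inverse r) powr w * V powr w"
    unfolding hatB_cplx_def assms(2) using assms(1) by (intro powr_times_real_left) auto
  also have "of_real (inverse r) powr w = of_real r powr (-w)" using assms(1) by (rule ofreal_inv_powr)
  also have "r = 2 * pi * (r / (2*pi))" by simp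
  also have "complex_of_real (2 * pi * (r / (2*pi))) powr (-w) = of_real (2*pi) powr (-w) * of_real (r/(2*pi)) powr (-w)"
    by (rule ofreal_mult_powr) simp
  finally show ?thesis .
qed

lemma aux_ri: "r \<noteq> 0 \<Longrightarrow> (1 - e) / (\<i> * complex_of_real r) = complex_of_real (inverse r) * ((1 - e) / \<i>)"
  by (simp add: field_simps)

lemma aux_ri2: "r \<noteq> 0 \<Longrightarrow> (1 - e) / (\<i> * complex_of_real (- r)) = complex_of_real (inverse r) * (- ((1 - e) / \<i>))"
  by (simp add: field_simps)

definition WW :: "real \<Rightarrow> complex" where "WW \<xi> = (1 - exp (- \<i> * of_real \<xi>)) / \<i>"

lemma WW_eq: "WW \<xi> = Complex (sin \<xi>) (cos \<xi> - 1)"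
  by (simp add: WW_def complex_eq_iff exp_minus_Euler cos_of_real sin_of_real Re_divide Im_divide)

lemma WW_Im: assumes "0 < \<xi>" "\<xi> < 2*pi" shows "Im (WW \<xi>) < 0"
proof -
  have "cos \<xi> \<noteq> 1"
  proof
    assume "cos \<xi> = 1"
    then obtain n :: int where n: "\<xi> = n * 2 * pi" by (auto simp: cos_one_2pi_int)
    from n assms have "0 < real_of_int n * (2*pi)" "real_of_int n * (2*pi) < 1 * (2*pi)" by (auto simp: mult_ac)
    hence "0 < real_of_int n" "real_of_int n < 1" by (auto simp: zero_less_mult_iff mult_less_cancel_right)
    hence "0 < n" "n < 1" by simp_all
    thus False by simp
  qed
  moreover have "cos \<xi> \<le> 1" by simp
  ultimately have "cos \<xi> < 1" by linarith
  thus ?thesis by (simp add: WW_eq)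
qed

lemma hatB_pos:
  assumes "0 < \<xi>"
  shows "hatB_cplx w (\<xi> + 2 * pi * of_int (int n)) =
     of_real (2*pi) powr (-w) * of_real (\<xi>/(2*pi) + real n) powr (-w) * WW \<xi> powr w"
proof -
  let ?r = "\<xi> + 2*pi * real n"
  have r: "0 < ?r" using assms by (simp add: add_pos_nonneg)
  have "Xi (\<xi> + 2 * pi * of_int (int n)) = (1 - exp (- \<i> * of_real \<xi>)) / (\<i> * of_real ?r)"
    using r by (subst Xi_shift) auto
  also have "\<dots> = complex_of_real (inverse ?r) * WW \<xi>" unfolding WW_def using r by (intro aux_ri) auto
  finally have "Xi (\<xi> + 2 * pi * of_int (int n)) = complex_of_real (inverse ?r) * WW \<xi>" .
  from hatB_scaled[OF r this] show ?thesis by (simp add: field_simps)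
qed

lemma hatB_neg:
  assumes "0 < \<xi>" "\<xi> < 2*pi"
  shows "hatB_cplx w (\<xi> + 2 * pi * of_int (- int n - 1)) =
     of_real (2*pi) powr (-w) * of_real (1 - \<xi>/(2*pi) + real n) powr (-w) * (exp (\<i> * pi * w) * WW \<xi> powr w)"
proof -
  let ?r = "2*pi * (real n + 1) - \<xi>"
  have "2*pi*1 \<le> 2*pi*(real n + 1)" by (intro mult_left_mono) auto
  hence r: "0 < ?r" using assms by linarith
  have ee: "\<xi> + 2 * pi * of_int (- int n - 1) = - ?r" by (simp add: algebra_simps)
  have "Xi (\<xi> + 2 * pi * of_int (- int n - 1)) = (1 - exp (- \<i> * of_real \<xi>)) / (\<i> * of_real (\<xi> + 2 * pi * of_int (- int n - 1)))"
    using r ee by (intro Xi_shift) auto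
  also have "\<dots> = (1 - exp (- \<i> * of_real \<xi>)) / (\<i> * of_real (- ?r))" unfolding ee ..
  also have "\<dots> = complex_of_real (inverse ?r) * (- WW \<xi>)" unfolding WW_def using r by (intro aux_ri2) auto
  finally have "Xi (\<xi> + 2 * pi * of_int (- int n - 1)) = complex_of_real (inverse ?r) * (- WW \<xi>)" .
  from hatB_scaled[OF r this] 
  have "hatB_cplx w (\<xi> + 2 * pi * of_int (- int n - 1)) = of_real (2*pi) powr (-w) * of_real (?r/(2*pi)) powr (-w) * (- WW \<xi>) powr w" .
  also have "?r/(2*pi) = 1 - \<xi>/(2*pi) + real n" by (simp add: field_simps)
  also have "(- WW \<xi>) powr w = exp (\<i> * pi * w) * WW \<xi> powr w"
  proof -
    have Im: "Im (WW \<xi>) < 0" using WW_Im assms by blast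
    hence nz: "WW \<xi> \<noteq> 0" by auto
    have "Ln (- WW \<xi>) = Ln (WW \<xi>) + \<i> * pi" using Im nz by (subst Ln_minus) auto
    thus ?thesis using nz by (simp add: powr_def exp_add[symmetric] algebra_simps)
  qed
  finally show ?thesis .
qed

lemma hz_summable: 
  assumes "0 < a" "1 < Re s"
  shows "summable (\<lambda>k. norm (complex_of_real (a + real k) powr (-s)))"
proof -
  have eq: "norm (complex_of_real (a + real k) powr (-s)) = (a + real k) powr (- Re s)" for k
    using assms by (subst norm_powr_real_powr) auto
  have "summable (\<lambda>k. (real k + 1) powr (- Re s))" using assms by (intro summable_nat_powr) auto
  hence "summable (\<lambda>k. (a + real (Suc k)) powr (- Re s))"
    by (rule summable_comparison_test'[where N=0]) (use assms in \<open>auto intro!: powr_mono2'\<close>)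
  hence "summable (\<lambda>k. (a + real k) powr (- Re s))" by (subst (asm) summable_Suc_iff)
  thus ?thesis unfolding eq .
qed

lemma hz_has_sum:
  assumes "0 < a" "1 < Re s"
  shows "((\<lambda>k. complex_of_real (a + real k) powr (-s)) has_sum hurwitz_zeta s a) UNIV"
proof (rule norm_summable_imp_has_sum[OF hz_summable[OF assms]])
  show "(\<lambda>k. complex_of_real (a + real k) powr (-s)) sums hurwitz_zeta s a"
    unfolding hurwitz_zeta_def using summable_norm_cancel[OF hz_summable[OF assms]]
    by (simp add: summable_sums)
qed

lemma int_UNIV_split: "(UNIV :: int set) = range int \<union> range (\<lambda>n. - int n - 1)"
proof (rule set_eqI)
  fix k :: int
  show "k \<in> UNIV \<longleftrightarrow> k \<in> range int \<union> range (\<lambda>n. - int n - 1)"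
  proof (cases "k \<ge> 0")
    case True then have "k = int (nat k)" by simp
    thus ?thesis by blast
  next
    case False then have "k = - int (nat (-k-1)) - 1" by simp
    thus ?thesis by blast
  qed
qed

lemma Dw_hurwitz:
  assumes "1 < Re w" "0 < \<xi>" "\<xi> < 2*pi"
  shows "Dw w \<xi> = of_real (2*pi) powr (-w) * WW \<xi> powr w *
     (hurwitz_zeta w (\<xi>/(2*pi)) + exp (\<i> * pi * w) * hurwitz_zeta w (1 - \<xi>/(2*pi)))"
proof -
  let ?g = "\<lambda>k::int. hatB_cplx w (\<xi> + 2 * pi * of_int k)"
  let ?C = "of_real (2*pi) powr (-w) * WW \<xi> powr w"
  have a1: "0 < \<xi>/(2*pi)" using assms by simp
  have a2: "0 < 1 - \<xi>/(2*pi)" using assms by (simp add: field_simps)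
  have h1: "(?g has_sum (?C * hurwitz_zeta w (\<xi>/(2*pi)))) (range int)"
  proof (subst has_sum_reindex)
    show "inj_on int UNIV" by simp
    have "((\<lambda>n. ?C * complex_of_real (\<xi>/(2*pi) + real n) powr (-w)) has_sum (?C * hurwitz_zeta w (\<xi>/(2*pi)))) UNIV"
      by (intro has_sum_cmult_right hz_has_sum a1 assms)
    moreover have "(?g \<circ> int) = (\<lambda>n. ?C * complex_of_real (\<xi>/(2*pi) + real n) powr (-w))"
      using hatB_pos[OF assms(2)] by (auto simp: fun_eq_iff mult_ac)
    ultimately show "((?g \<circ> int) has_sum (?C * hurwitz_zeta w (\<xi>/(2*pi)))) UNIV" by simp
  qed
  have h2: "(?g has_sum (?C * (exp (\<i> * pi * w) * hurwitz_zeta w (1 - \<xi>/(2*pi))))) (range (\<lambda>n. - int n - 1))"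
  proof (subst has_sum_reindex)
    show "inj_on (\<lambda>n. - int n - 1) UNIV" by (auto simp: inj_on_def)
    have "((\<lambda>n. (?C * exp (\<i> * pi * w)) * complex_of_real (1 - \<xi>/(2*pi) + real n) powr (-w)) has_sum ((?C * exp (\<i> * pi * w)) * hurwitz_zeta w (1 - \<xi>/(2*pi)))) UNIV"
      by (intro has_sum_cmult_right hz_has_sum a2 assms)
    moreover have "(?g \<circ> (\<lambda>n. - int n - 1)) = (\<lambda>n. (?C * exp (\<i> * pi * w)) * complex_of_real (1 - \<xi>/(2*pi) + real n) powr (-w))"
      using hatB_neg[OF assms(2,3)] by (auto simp: fun_eq_iff mult_ac)
    ultimately show "((?g \<circ> (\<lambda>n. - int n - 1)) has_sum (?C * (exp (\<i> * pi * w) * hurwitz_zeta w (1 - \<xi>/(2*pi))))) UNIV"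
      by (simp add: mult_ac)
  qed
  have "(?g has_sum (?C * hurwitz_zeta w (\<xi>/(2*pi)) + ?C * (exp (\<i> * pi * w) * hurwitz_zeta w (1 - \<xi>/(2*pi)))))
          (range int \<union> range (\<lambda>n. - int n - 1))"
    by (rule has_sum_Un_disjoint[OF h1 h2]) auto
  hence "(?g has_sum (?C * (hurwitz_zeta w (\<xi>/(2*pi)) + exp (\<i> * pi * w) * hurwitz_zeta w (1 - \<xi>/(2*pi))))) UNIV"
    by (simp add: int_UNIV_split[symmetric] distrib_left)
  thus ?thesis unfolding Dw_def by (rule infsumI)
qed

lemma cnj_hurwitz:
  assumes "0 < a" "1 < Re s"
  shows "cnj (hurwitz_zeta s a) = hurwitz_zeta (cnj s) a"
proof -
  have "(\<lambda>k. complex_of_real (a + real k) powr (-s)) sums hurwitz_zeta s a"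
    using has_sum_imp_sums[OF hz_has_sum[OF assms]] .
  hence "(\<lambda>k. cnj (complex_of_real (a + real k) powr (-s))) sums cnj (hurwitz_zeta s a)"
    by (subst sums_cnj)
  moreover have "cnj (complex_of_real (a + real k) powr (-s)) = complex_of_real (a + real k) powr (- cnj s)" for k
    using assms by (subst cnj_powr) auto
  ultimately have "(\<lambda>k. complex_of_real (a + real k) powr (- cnj s)) sums cnj (hurwitz_zeta s a)" by simp
  thus ?thesis unfolding hurwitz_zeta_def[of "cnj s"] by (simp add: sums_iff)
qed

lemma Dw_nz:
  assumes w: "1 < Re w"
  assumes H: "\<forall>\<alpha>\<in>{0<..<1}. hurwitz_zeta (cnj w) \<alpha> + exp (- \<i> * of_real pi * cnj w) * hurwitz_zeta (cnj w) (1 - \<alpha>) \<noteq> 0"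
  shows "Dw w \<xi> \<noteq> 0"
proof -
  define n where "n = \<lfloor>\<xi> / (2*pi)\<rfloor>"
  define \<eta> where "\<eta> = \<xi> - 2 * pi * of_int n"
  have "of_int n \<le> \<xi> / (2*pi)" "\<xi> / (2*pi) < of_int n + 1" unfolding n_def by linarith+
  hence e1: "0 \<le> \<eta>" "\<eta> < 2*pi" unfolding \<eta>_def by (simp_all add: field_simps)
  have "Dw w \<xi> = Dw w \<eta>" using Dw_periodic[of w \<eta> n] by (simp add: \<eta>_def)
  moreover have "Dw w \<eta> \<noteq> 0"
  proof (cases "\<eta> = 0")
    case True thus ?thesis by (simp add: Dw_0)
  next
    case False
    hence e0: "0 < \<eta>" using e1 by simp
    define \<alpha> where "\<alpha> = \<eta>/(2*pi)"
    have a: "\<alpha> \<in> {0<..<1}" using e0 e1 by (simp add: \<alpha>_def field_simps)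
    have a2: "0 < 1 - \<alpha>" using a by simp
    have cw: "1 < Re (cnj w)" using w by simp
    have "cnj (hurwitz_zeta (cnj w) \<alpha> + exp (- \<i> * of_real pi * cnj w) * hurwitz_zeta (cnj w) (1 - \<alpha>))
        = hurwitz_zeta w \<alpha> + exp (\<i> * pi * w) * hurwitz_zeta w (1 - \<alpha>)"
      using cnj_hurwitz[OF _ cw, of \<alpha>] cnj_hurwitz[OF a2 cw] a by (simp add: exp_cnj)
    hence hz: "hurwitz_zeta w \<alpha> + exp (\<i> * pi * w) * hurwitz_zeta w (1 - \<alpha>) \<noteq> 0"
      using H a by (metis complex_cnj_zero_iff)
    have "WW \<eta> \<noteq> 0" using WW_Im[OF e0 e1(2)] by auto
    hence "WW \<eta> powr w \<noteq> 0" by (simp add: powr_def)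
    moreover have "complex_of_real (2*pi) powr (-w) \<noteq> 0" by (simp add: powr_def)
    ultimately show ?thesis using Dw_hurwitz[OF w e0 e1(2)] hz by (simp add: \<alpha>_def)
  qed
  ultimately show ?thesis by simp
qed

lemma Dw_lower:
  assumes w: "1 < Re w" and nz: "\<And>\<xi>. Dw w \<xi> \<noteq> 0"
  shows "\<exists>m>0. \<forall>\<xi>. m \<le> cmod (Dw w \<xi>)"
proof -
  have "continuous_on {0..2*pi} (\<lambda>\<xi>. cmod (Dw w \<xi>))"
    using Dw_cont[OF w] by (intro continuous_intros) (auto intro: continuous_on_subset)
  then obtain x0 where x0: "x0 \<in> {0..2*pi}" "\<forall>y\<in>{0..2*pi}. cmod (Dw w x0) \<le> cmod (Dw w y)"
    using continuous_attains_inf[of "{0..2*pi}" "\<lambda>\<xi>. cmod (Dw w \<xi>)"] by auto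
  have "\<forall>\<xi>. cmod (Dw w x0) \<le> cmod (Dw w \<xi>)"
  proof
    fix \<xi>
    define n where "n = \<lfloor>\<xi> / (2*pi)\<rfloor>"
    define \<eta> where "\<eta> = \<xi> - 2 * pi * of_int n"
    have "of_int n \<le> \<xi> / (2*pi)" "\<xi> / (2*pi) < of_int n + 1" unfolding n_def by linarith+
    hence e1: "0 \<le> \<eta>" "\<eta> < 2*pi" unfolding \<eta>_def by (simp_all add: field_simps)
    have "Dw w \<xi> = Dw w \<eta>" using Dw_periodic[of w \<eta> n] by (simp add: \<eta>_def)
    thus "cmod (Dw w x0) \<le> cmod (Dw w \<xi>)" using x0 e1 by auto
  qed
  moreover have "0 < cmod (Dw w x0)" using nz by simp
  ultimately show ?thesis by blast
qed

section \<open>Quaternion algebra in the subalgebra spanned by 1 and u\<close>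

definition mk2 :: "real \<Rightarrow> real \<Rightarrow> real \<Rightarrow> complex \<Rightarrow> complex \<Rightarrow> cquat" where
  "mk2 u1 u2 u3 a b = CQuat ((a + b) / 2) (of_real u1 * ((a - b) / (2 * \<i>)))
      (of_real u2 * ((a - b) / (2 * \<i>))) (of_real u3 * ((a - b) / (2 * \<i>)))"

lemma ring_aux: "X*X' - (U1*Y)*(U1*Y') - (U2*Y)*(U2*Y') - (U3*Y)*(U3*Y') = X*X' - (U1^2+U2^2+U3^2)*(Y*(Y'::complex))"
  by (simp add: power2_eq_square algebra_simps)

lemma alg0:
  assumes "U1^2 + U2^2 + U3^2 = (1::complex)"
  shows "((a+b)/2)*((c+d)/2) - (U1*((a-b)/(2*\<i>)))*(U1*((c-d)/(2*\<i>)))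
         - (U2*((a-b)/(2*\<i>)))*(U2*((c-d)/(2*\<i>))) - (U3*((a-b)/(2*\<i>)))*(U3*((c-d)/(2*\<i>)))
       = (a*c + b*d)/2"
proof -
  have "((a+b)/2)*((c+d)/2) - (U1*((a-b)/(2*\<i>)))*(U1*((c-d)/(2*\<i>)))
         - (U2*((a-b)/(2*\<i>)))*(U2*((c-d)/(2*\<i>))) - (U3*((a-b)/(2*\<i>)))*(U3*((c-d)/(2*\<i>)))
       = ((a+b)/2)*((c+d)/2) - (U1^2 + U2^2 + U3^2) * (((a-b)/(2*\<i>))*((c-d)/(2*\<i>)))"
    by (rule ring_aux)
  also have "\<dots> = ((a+b)/2)*((c+d)/2) - ((a-b)/(2*\<i>))*((c-d)/(2*\<i>))" using assms by simp
  also have "\<dots> = (a*c + b*d)/2" by (simp add: field_simps; simp add: algebra_simps)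
  finally show ?thesis .
qed

lemma alg1: "((a+b)/2)*(U*((c-d)/(2*\<i>))) + (U*((a-b)/(2*\<i>)))*((c+d)/2) + (V*((a-b)/(2*\<i>)))*(W*((c-d)/(2*\<i>)))
    - (W*((a-b)/(2*\<i>)))*(V*((c-d)/(2*\<i>))) = U * ((a*c - b*d)/(2*\<i>))"
  by (simp add: field_simps; simp add: algebra_simps)

lemma alg2: "((a+b)/2)*(U*((c-d)/(2*\<i>))) - (V*((a-b)/(2*\<i>)))*(W*((c-d)/(2*\<i>))) + (U*((a-b)/(2*\<i>)))*((c+d)/2)
    + (W*((a-b)/(2*\<i>)))*(V*((c-d)/(2*\<i>))) = U * ((a*c - b*d)/(2*\<i>))"
  by (simp add: field_simps; simp add: algebra_simps)

lemma alg3: "((a+b)/2)*(U*((c-d)/(2*\<i>))) + (V*((a-b)/(2*\<i>)))*(W*((c-d)/(2*\<i>))) - (W*((a-b)/(2*\<i>)))*(V*((c-d)/(2*\<i>)))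
    + (U*((a-b)/(2*\<i>)))*((c+d)/2) = U * ((a*c - b*d)/(2*\<i>))"
  by (simp add: field_simps; simp add: algebra_simps)

lemma mk2_mult:
  assumes "u1^2 + u2^2 + u3^2 = 1"
  shows "cq_mult (mk2 u1 u2 u3 a b) (mk2 u1 u2 u3 c d) = mk2 u1 u2 u3 (a*c) (b*d)"
proof -
  have U: "(of_real u1)^2 + (of_real u2)^2 + (of_real u3)^2 = (1::complex)"
    using arg_cong[OF assms, of complex_of_real] by simp
  show ?thesis
    unfolding cq_mult_def mk2_def cquat.sel
    by (simp only: alg0[OF U] alg1 alg2 alg3)
qed

lemma inv0: "a \<noteq> 0 \<Longrightarrow> b \<noteq> 0 \<Longrightarrow> ((a+b)/2)/(a*b) = (inverse a + inverse b)/(2::complex)"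
  by (simp add: field_simps)

lemma inv1: "a \<noteq> 0 \<Longrightarrow> b \<noteq> 0 \<Longrightarrow> - (U*((a-b)/(2*\<i>)))/(a*b) = U * ((inverse a - inverse b)/(2*\<i>))"
  by (simp add: field_simps)

lemma mk2_inverse:
  assumes "u1^2 + u2^2 + u3^2 = 1" "a \<noteq> 0" "b \<noteq> 0"
  shows "cq_inverse (mk2 u1 u2 u3 a b) = mk2 u1 u2 u3 (inverse a) (inverse b)"
proof -
  have U: "(of_real u1)^2 + (of_real u2)^2 + (of_real u3)^2 = (1::complex)"
    using arg_cong[OF assms(1), of complex_of_real] by simp
  have N: "((a + b) / 2)^2 + (of_real u1 * ((a - b) / (2 * \<i>)))^2 + (of_real u2 * ((a - b) / (2 * \<i>)))^2
      + (of_real u3 * ((a - b) / (2 * \<i>)))^2 = a * b"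
  proof -
    have "((a + b) / 2)^2 + (of_real u1 * ((a - b) / (2 * \<i>)))^2 + (of_real u2 * ((a - b) / (2 * \<i>)))^2
      + (of_real u3 * ((a - b) / (2 * \<i>)))^2 = ((a + b) / 2)^2 + ((of_real u1)^2 + (of_real u2)^2 + (of_real u3)^2) * ((a - b) / (2 * \<i>))^2"
      by (simp only: power_mult_distrib distrib_right add.assoc)
    also have "\<dots> = ((a + b) / 2)^2 + ((a - b) / (2 * \<i>))^2" using U by simp
    also have "\<dots> = a * b" by (simp add: field_simps power2_eq_square; simp add: algebra_simps)
    finally show ?thesis .
  qed
  show ?thesis
    unfolding cq_inverse_def Let_def cquat.sel N mk2_def[of _ _ _ a b]
    unfolding mk2_def
    by (simp only: inv0[OF assms(2,3)] inv1[OF assms(2,3)])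
qed

lemma mk2_scale: "cq_scale c (mk2 u1 u2 u3 a b) = mk2 u1 u2 u3 (c * a) (c * b)"
  unfolding cq_scale_def mk2_def cquat.sel by (simp add: algebra_simps)

lemma infsum_diff':
  fixes f g :: "'a \<Rightarrow> complex"
  assumes "f summable_on A" "g summable_on A"
  shows "infsum (\<lambda>x. f x - g x) A = infsum f A - infsum g A"
proof -
  have "(\<lambda>x. - g x) summable_on A" using assms(2) by (simp add: summable_on_uminus)
  from infsum_add[OF assms(1) this] show ?thesis by (simp add: infsum_uminus)
qed

lemma mk2_infsum:
  assumes "f summable_on UNIV" "g summable_on UNIV"
  shows "cq_infsum_int (\<lambda>k. mk2 u1 u2 u3 (f k) (g k)) = mk2 u1 u2 u3 (infsum f UNIV) (infsum g UNIV)"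
proof -
  have s: "infsum (\<lambda>k. (f k + g k) / 2) UNIV = (infsum f UNIV + infsum g UNIV) / 2"
    unfolding divide_inverse infsum_cmult_left' infsum_add[OF assms] ..
  have d: "infsum (\<lambda>k. of_real u * ((f k - g k) / (2 * \<i>))) UNIV = of_real u * ((infsum f UNIV - infsum g UNIV) / (2 * \<i>))" for u
    unfolding divide_inverse infsum_cmult_left' infsum_cmult_right' infsum_diff'[OF assms] ..
  show ?thesis unfolding cq_infsum_int_def mk2_def cquat.sel s d ..
qed

lemma mk2_integral:
  assumes "integrable lborel f" "integrable lborel g"
  shows "cq_integral (\<lambda>x. mk2 u1 u2 u3 (f x) (g x)) = mk2 u1 u2 u3 (LINT x|lborel. f x) (LINT x|lborel. g x)"
proof -
  have s: "(LINT x|lborel. (f x + g x) / 2) = ((LINT x|lborel. f x) + (LINT x|lborel. g x)) / 2"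
    unfolding divide_inverse integral_mult_left_zero Bochner_Integration.integral_add[OF assms] ..
  have d: "(LINT x|lborel. of_real u * ((f x - g x) / (2 * \<i>))) = of_real u * (((LINT x|lborel. f x) - (LINT x|lborel. g x)) / (2 * \<i>))" for u
    unfolding divide_inverse integral_mult_left_zero integral_mult_right_zero Bochner_Integration.integral_diff[OF assms] ..
  show ?thesis unfolding cq_integral_def mk2_def cquat.sel s d ..
qed

lemma mk2_qpow:
  assumes "vnorm q \<noteq> 0"
  shows "qpow \<zeta> q = mk2 (rq1 q / vnorm q) (rq2 q / vnorm q) (rq3 q / vnorm q)
      (\<zeta> powr Complex (rq0 q) (vnorm q)) (\<zeta> powr cnj (Complex (rq0 q) (vnorm q)))"
proof (cases "\<zeta> = 0")
  case True thus ?thesis by (simp add: qpow_def mk2_def)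
next
  case False
  define A where "A = \<zeta> powr complex_of_real (rq0 q)"
  define L where "L = complex_of_real (vnorm q) * Ln \<zeta>"
  have A: "A = exp (of_real (rq0 q) * Ln \<zeta>)" using False by (simp add: A_def powr_def)
  have P1: "\<zeta> powr Complex (rq0 q) (vnorm q) = A * (cos L + \<i> * sin L)"
  proof -
    have "\<zeta> powr Complex (rq0 q) (vnorm q) = exp (of_real (rq0 q) * Ln \<zeta> + \<i> * L)"
      using False by (simp add: powr_def L_def Complex_eq algebra_simps)
    also have "\<dots> = A * (cos L + \<i> * sin L)" by (simp add: exp_add A exp_Euler)
    finally show ?thesis .
  qed
  have P2: "\<zeta> powr cnj (Complex (rq0 q) (vnorm q)) = A * (cos L - \<i> * sin L)"
  proof -
    have "\<zeta> powr cnj (Complex (rq0 q) (vnorm q)) = exp (of_real (rq0 q) * Ln \<zeta> + - (\<i> * L))"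
      using False by (simp add: powr_def L_def Complex_eq algebra_simps)
    also have "\<dots> = A * (cos L - \<i> * sin L)" by (simp only: exp_add A exp_minus_Euler)
    finally show ?thesis .
  qed
  define P where "P = \<zeta> powr Complex (rq0 q) (vnorm q)"
  define P' where "P' = \<zeta> powr cnj (Complex (rq0 q) (vnorm q))"
  have e1: "(P + P') / 2 = A * cos L" unfolding P_def P'_def P1 P2 by (simp add: algebra_simps)
  have e2: "(P - P') / (2 * \<i>) = A * sin L" unfolding P_def P'_def P1 P2 by (simp add: algebra_simps)
  have "qpow \<zeta> q = CQuat (A * cos L) (A * of_real (rq1 q / vnorm q) * sin L)
      (A * of_real (rq2 q / vnorm q) * sin L) (A * of_real (rq3 q / vnorm q) * sin L)"
    unfolding qpow_def Let_def A_def[symmetric] L_def[symmetric] using False by (simp only: if_False)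
  also have "\<dots> = mk2 (rq1 q / vnorm q) (rq2 q / vnorm q) (rq3 q / vnorm q) P P'"
    unfolding mk2_def e1 e2 by (simp only: mult_ac)
  finally show ?thesis unfolding P_def P'_def .
qed

lemma hatB_cnj: "hatB_cplx (cnj w) \<xi> = cnj (hatB_cplx w (-\<xi>))"
  unfolding hatB_cplx_def using Xi_Im0[of "-\<xi>"] by (subst cnj_powr) (auto simp: Xi_cnj)

lemma Dw_cnj: "Dw (cnj w) \<xi> = cnj (Dw w (-\<xi>))"
  unfolding Dw_def infsum_cnj[symmetric]
  by (rule infsum_reindex_bij_witness[of UNIV uminus uminus]) (auto simp: hatB_cnj algebra_simps)

definition Fw :: "complex \<Rightarrow> real \<Rightarrow> real \<Rightarrow> complex" where
  "Fw w t \<xi> = exp (\<i> * of_real (\<xi> * t)) / (2 * of_real pi) * (hatB_cplx w \<xi> * inverse (Dw w \<xi>))"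

lemma Fw_cnj: "Fw (cnj w) t \<xi> = cnj (Fw w t (-\<xi>))"
proof -
  have e: "cnj (exp (\<i> * of_real (- \<xi> * t))) = exp (\<i> * of_real (\<xi> * t))"
    by (simp add: exp_cnj)
  have p: "cnj (2 * complex_of_real pi) = 2 * complex_of_real pi" by simp
  have "cnj (Fw w t (-\<xi>)) = cnj (exp (\<i> * of_real (- \<xi> * t))) / cnj (2 * of_real pi) * (cnj (hatB_cplx w (-\<xi>)) * inverse (cnj (Dw w (-\<xi>))))"
    by (simp only: Fw_def complex_cnj_mult complex_cnj_divide complex_cnj_inverse)
  also have "\<dots> = Fw (cnj w) t \<xi>"
    unfolding e p hatB_cnj[symmetric] Dw_cnj[symmetric] Fw_def ..
  finally show ?thesis ..
qed

lemma aux_frac: "(a::complex) / b * (c * inverse d) = (1 / b) * (c / d * a)"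
  by (simp add: divide_inverse mult_ac)

lemma L_cplx_eq: "L_cplx w t = integral\<^sup>L lborel (Fw w t)"
proof -
  have "Fw w t = (\<lambda>\<xi>. (1 / (2 * of_real pi)) * (hatB_cplx w \<xi> / Dw w \<xi> * exp (\<i> * of_real (\<xi> * t))))"
    unfolding Fw_def by (rule ext) (rule aux_frac)
  hence "integral\<^sup>L lborel (Fw w t) = (1 / (2 * of_real pi)) * (LINT \<xi>|lborel. hatB_cplx w \<xi> / Dw w \<xi> * exp (\<i> * of_real (\<xi> * t)))"
    by (simp only: integral_mult_right_zero)
  thus ?thesis unfolding L_cplx_def Dw_def[symmetric] by simp
qed

lemma integral_Fw_cnj: "integral\<^sup>L lborel (Fw (cnj w) t) = cnj (integral\<^sup>L lborel (Fw w t))"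
proof -
  have "integral\<^sup>L lborel (Fw w t) = \<bar>-1\<bar> *\<^sub>R integral\<^sup>L lborel (\<lambda>x. Fw w t (0 + -1 * x))"
    by (rule lborel_integral_real_affine) simp
  hence "integral\<^sup>L lborel (Fw w t) = integral\<^sup>L lborel (\<lambda>x. Fw w t (- x))" by simp
  moreover have "integral\<^sup>L lborel (Fw (cnj w) t) = cnj (integral\<^sup>L lborel (\<lambda>x. Fw w t (- x)))"
    unfolding Fw_cnj by simp
  ultimately show ?thesis by simp
qed

lemma integrable_decay:
  fixes s :: real
  assumes "1 < s"
  shows "integrable lborel (\<lambda>x::real. (\<bar>x\<bar> + 1) powr (- s))"
proof -
  define f0 where "f0 = (\<lambda>x::real. indicator {1..} x *\<^sub>R x powr (- s))"
  have "((\<lambda>x. x powr (- s)) has_integral - (1 powr (- s + 1)) / (- s + 1)) {1..}"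
    using assms by (intro has_integral_powr_to_inf) auto
  hence "(\<lambda>x::real. x powr (- s)) integrable_on {1..}" by (rule has_integral_integrable)
  hence "(\<lambda>x::real. x powr (- s)) absolutely_integrable_on {1..}"
    by (rule nonnegative_absolutely_integrable_1) auto
  hence "integrable lebesgue f0" by (simp add: set_integrable_def f0_def)
  moreover have meas0: "f0 \<in> borel_measurable lborel" unfolding f0_def by measurable
  ultimately have i0: "integrable lborel f0" by (simp add: integrable_completion)
  have i1: "integrable lborel (\<lambda>x. f0 (1 + 1 * x))" by (rule lborel_integrable_real_affine[OF i0]) simp
  have i2: "integrable lborel (\<lambda>x. f0 (1 + (-1) * x))" by (rule lborel_integrable_real_affine[OF i0]) simp
  have i3: "integrable lborel (\<lambda>x. f0 (1 + 1 * x) + f0 (1 + (-1) * x))"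
    by (rule Bochner_Integration.integrable_add[OF i1 i2])
  have nn: "0 \<le> f0 x" for x by (simp add: f0_def)
  show ?thesis
  proof (rule Bochner_Integration.integrable_bound[OF i3])
    show "(\<lambda>x::real. (\<bar>x\<bar> + 1) powr (- s)) \<in> borel_measurable lborel" by measurable
    show "AE x in lborel. norm ((\<bar>x\<bar> + 1) powr (- s)) \<le> norm (f0 (1 + 1 * x) + f0 (1 + (-1) * x))"
    proof (rule AE_I2)
      fix x :: real
      have "(\<bar>x\<bar> + 1) powr (- s) \<le> f0 (1 + 1 * x) + f0 (1 + (-1) * x)"
      proof (cases "x \<ge> 0")
        case True
        hence "f0 (1 + 1 * x) = (\<bar>x\<bar> + 1) powr (- s)" by (simp add: f0_def add.commute)
        thus ?thesis using nn[of "1 + (-1) * x"] by simp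
      next
        case False
        hence "f0 (1 + (-1) * x) = (\<bar>x\<bar> + 1) powr (- s)" by (simp add: f0_def add.commute)
        thus ?thesis using nn[of "1 + 1 * x"] by simp
      qed
      thus "norm ((\<bar>x\<bar> + 1) powr (- s)) \<le> norm (f0 (1 + 1 * x) + f0 (1 + (-1) * x))"
        using nn[of "1 + 1 * x"] nn[of "1 + (-1) * x"] by simp
    qed
  qed
qed

lemma integrable_Fw:
  assumes w: "1 < Re w" and nz: "\<And>\<xi>. Dw w \<xi> \<noteq> 0"
  shows "integrable lborel (Fw w t)"
proof -
  obtain m where m: "0 < m" "\<And>\<xi>. m \<le> cmod (Dw w \<xi>)" using Dw_lower[OF w nz] by blast
  define E where "E = exp (\<bar>Im w\<bar> * pi)"
  define K where "K = 4 powr Re w * E / (2 * pi * m)"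
  have cont: "continuous_on UNIV (Fw w t)"
  proof -
    have "continuous_on UNIV (\<lambda>\<xi>. inverse (Dw w \<xi>))"
      using Dw_cont[OF w] nz by (intro continuous_on_inverse) auto
    moreover have "continuous_on UNIV (hatB_cplx w)" using w by (intro hatB_cont) simp
    moreover have "continuous_on UNIV (\<lambda>\<xi>. exp (\<i> * of_real (\<xi> * t)) / (2 * of_real pi))"
      by (intro continuous_intros) auto
    ultimately have "continuous_on UNIV (\<lambda>\<xi>. exp (\<i> * of_real (\<xi> * t)) / (2 * of_real pi) * (hatB_cplx w \<xi> * inverse (Dw w \<xi>)))"
      by (intro continuous_on_mult) auto
    thus ?thesis unfolding Fw_def[abs_def] .
  qed
  have bound: "cmod (Fw w t \<xi>) \<le> K * (\<bar>\<xi>\<bar> + 1) powr (- Re w)" for \<xi>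
  proof -
    have "cmod (Fw w t \<xi>) = cmod (hatB_cplx w \<xi>) * inverse (cmod (Dw w \<xi>)) / (2 * pi)"
      by (simp add: Fw_def norm_mult norm_divide norm_inverse)
    also have "\<dots> \<le> ((4 / (\<bar>\<xi>\<bar> + 1)) powr Re w * E) * inverse m / (2 * pi)"
    proof (intro divide_right_mono mult_mono)
      show "cmod (hatB_cplx w \<xi>) \<le> (4 / (\<bar>\<xi>\<bar> + 1)) powr Re w * E"
        unfolding E_def using w by (intro norm_hatB) simp
      show "inverse (cmod (Dw w \<xi>)) \<le> inverse m" using m by (intro le_imp_inverse_le) auto
    qed (auto simp: E_def)
    also have "\<dots> = K * (\<bar>\<xi>\<bar> + 1) powr (- Re w)"
    proof -
      have p: "(4 / (\<bar>\<xi>\<bar> + 1)) powr Re w = 4 powr Re w * (\<bar>\<xi>\<bar> + 1) powr (- Re w)"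
        by (simp add: powr_divide powr_minus_divide)
      show ?thesis unfolding p K_def using m by (simp add: field_simps)
    qed
    finally show ?thesis .
  qed
  have "integrable lborel (\<lambda>\<xi>. K * (\<bar>\<xi>\<bar> + 1) powr (- Re w))"
    using integrable_decay[of "Re w"] w by simp
  thus ?thesis
  proof (rule Bochner_Integration.integrable_bound)
    show "Fw w t \<in> borel_measurable lborel"
      using cont by (simp add: borel_measurable_continuous_onI)
    show "AE x in lborel. norm (Fw w t x) \<le> norm (K * (\<bar>x\<bar> + 1) powr - Re w)"
    proof (rule AE_I2)
      fix x
      have "0 \<le> K" using m by (simp add: K_def E_def)
      thus "norm (Fw w t x) \<le> norm (K * (\<bar>x\<bar> + 1) powr - Re w)" using bound[of x] by simp
    qed
  qed
qed

theorem corollary1: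
  fixes R :: "complex set" and q :: rquat and z :: complex
  assumes "admissible_R R"
    and "q \<in> Q_set R"
    and "z = Complex (rq0 q) (vnorm q)"
  shows "\<forall>t::real. L_quat q t =
           CQuat (complex_of_real (Re (L_cplx z t)))
                 (complex_of_real (rq1 q / vnorm q * Im (L_cplx z t)))
                 (complex_of_real (rq2 q / vnorm q * Im (L_cplx z t)))
                 (complex_of_real (rq3 q / vnorm q * Im (L_cplx z t)))"
proof
  fix t :: real
  have zR: "z \<in> R" using assms(2,3) by (simp add: Q_set_def)
  have v0: "(rq1 q, rq2 q, rq3 q) \<noteq> (0,0,0)" using assms(2) by (simp add: Q_set_def)
  have Rsub: "R \<subseteq> {w. Re w > 1}" using assms(1) unfolding admissible_R_def by blast
  have cR: "cnj ` R = R" using assms(1) unfolding admissible_R_def by blast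
  have H: "\<forall>w\<in>R. \<forall>\<alpha>\<in>{0<..<1}. hurwitz_zeta w \<alpha> + exp (- \<i> * of_real pi * w) * hurwitz_zeta w (1 - \<alpha>) \<noteq> 0"
    using assms(1) unfolding admissible_R_def by blast
  have zR': "cnj z \<in> R" using zR cR by blast
  have z1: "1 < Re z" using zR Rsub by auto
  have z1': "1 < Re (cnj z)" using z1 by simp
  have Dz: "Dw z \<xi> \<noteq> 0" for \<xi> by (rule Dw_nz[OF z1 bspec[OF H zR']])
  have Dz': "Dw (cnj z) \<xi> \<noteq> 0" for \<xi> by (rule Dw_nz[OF z1']) (use bspec[OF H zR] in simp)
  have ss: "0 < rq1 q ^ 2 + rq2 q ^ 2 + rq3 q ^ 2"
  proof -
    consider "rq1 q \<noteq> 0" | "rq2 q \<noteq> 0" | "rq3 q \<noteq> 0" using v0 by auto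
    thus ?thesis by cases (smt (verit) zero_le_power2 zero_less_power2)+
  qed
  have vn: "0 < vnorm q" using ss by (simp add: vnorm_def)
  hence vq: "vnorm q \<noteq> 0" by simp
  have vn2: "(vnorm q)^2 = rq1 q ^ 2 + rq2 q ^ 2 + rq3 q ^ 2"
    using ss by (simp add: vnorm_def)
  have usum: "(rq1 q / vnorm q)^2 + (rq2 q / vnorm q)^2 + (rq3 q / vnorm q)^2 = 1"
    using vq vn2 ss by (simp add: power_divide add_divide_distrib[symmetric])
  have hq: "hatB_quat q x = mk2 (rq1 q / vnorm q) (rq2 q / vnorm q) (rq3 q / vnorm q) (hatB_cplx z x) (hatB_cplx (cnj z) x)" for x
    unfolding hatB_quat_def hatB_cplx_def assms(3) by (rule mk2_qpow[OF vq])
  have hs: "cq_infsum_int (\<lambda>k. hatB_quat q (\<xi> + 2 * pi * of_int k)) =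
      mk2 (rq1 q / vnorm q) (rq2 q / vnorm q) (rq3 q / vnorm q) (Dw z \<xi>) (Dw (cnj z) \<xi>)" for \<xi>
    unfolding hq Dw_def by (intro mk2_infsum summable_hatB_shift z1 z1')
  have hint: "cq_scale (exp (\<i> * of_real (\<xi> * t)) / (2 * of_real pi))
      (cq_mult (hatB_quat q \<xi>) (cq_inverse (cq_infsum_int (\<lambda>k. hatB_quat q (\<xi> + 2 * pi * of_int k)))))
     = mk2 (rq1 q / vnorm q) (rq2 q / vnorm q) (rq3 q / vnorm q) (Fw z t \<xi>) (Fw (cnj z) t \<xi>)" for \<xi>
    unfolding hs unfolding hq mk2_inverse[OF usum Dz Dz'] mk2_mult[OF usum] mk2_scale Fw_def ..
  have "L_quat q t = cq_integral (\<lambda>\<xi>. mk2 (rq1 q / vnorm q) (rq2 q / vnorm q) (rq3 q / vnorm q) (Fw z t \<xi>) (Fw (cnj z) t \<xi>))"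
    unfolding L_quat_def hint ..
  also have "\<dots> = mk2 (rq1 q / vnorm q) (rq2 q / vnorm q) (rq3 q / vnorm q) (LINT x|lborel. Fw z t x) (LINT x|lborel. Fw (cnj z) t x)"
    by (intro mk2_integral integrable_Fw z1 z1' Dz Dz')
  also have "\<dots> = mk2 (rq1 q / vnorm q) (rq2 q / vnorm q) (rq3 q / vnorm q) (L_cplx z t) (cnj (L_cplx z t))"
    by (simp only: L_cplx_eq integral_Fw_cnj)
  also have "\<dots> = CQuat (complex_of_real (Re (L_cplx z t)))
                 (complex_of_real (rq1 q / vnorm q * Im (L_cplx z t)))
                 (complex_of_real (rq2 q / vnorm q * Im (L_cplx z t)))
                 (complex_of_real (rq3 q / vnorm q * Im (L_cplx z t)))"
    unfolding mk2_def by (simp add: complex_eq_iff)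
  finally show "L_quat q t = CQuat (complex_of_real (Re (L_cplx z t)))
                 (complex_of_real (rq1 q / vnorm q * Im (L_cplx z t)))
                 (complex_of_real (rq2 q / vnorm q * Im (L_cplx z t)))
                 (complex_of_real (rq3 q / vnorm q * Im (L_cplx z t)))" .
qed

end
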